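(* Assume $p>2q$. For every integer $n\in\mathbb{N}$ there exists an integer $m$ such that $m$ is reachable from $n$ in $\mathcal{T}_{p/q}$ but not reachable from $n$ in $\widehat{\mathcal{T}_{p/q}}$.
   Context: Let $p>q>1$ be coprime integers, $A_p=\{0,\dots,p-1\}$ and $B=\{p-(2q-1),\dots,p-1\}$. For $n\in\mathbb{N}$ and $a\in\mathbb{Z}$, let $\tau(n,a)=\frac{np+a}{q}$, defined only when $q$ divides $np+a$. Let $\mathcal{T}_{p/q}$ (resp. $\widehat{\mathcal{T}_{p/q}}$) be the deterministic automaton with state set $\mathbb{N}$, alphabet $A_p$ (resp. $B$), and transitions $n\xrightarrow{a}\tau(n,a)$ for $a$ in the alphabet with $\tau(n,a)$ defined. A state $m$ is reachable from $n$ if there is a path (of transitions) from $n$ to $m$. *)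

theory Defs
  imports Main
begin

definition tau_defined :: "nat \<Rightarrow> nat \<Rightarrow> nat \<Rightarrow> int \<Rightarrow> bool" where
  "tau_defined p q n a \<longleftrightarrow> int q dvd (int n * int p + a)"

definition tau :: "nat \<Rightarrow> nat \<Rightarrow> nat \<Rightarrow> int \<Rightarrow> int" where
  "tau p q n a = (int n * int p + a) div int q"

definition alphA :: "nat \<Rightarrow> int set" where
  "alphA p = {0 .. int p - 1}"

definition alphB :: "nat \<Rightarrow> nat \<Rightarrow> int set" where
  "alphB p q = {int p - (2 * int q - 1) .. int p - 1}"

definition transition :: "nat \<Rightarrow> nat \<Rightarrow> int set \<Rightarrow> nat \<Rightarrow> nat \<Rightarrow> bool" where
  "transition p q Al n m \<longleftrightarrow>
     (\<exists>a\<in>Al. tau_defined p q n a \<and> int m = tau p q n a)"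

definition reachable :: "nat \<Rightarrow> nat \<Rightarrow> int set \<Rightarrow> nat \<Rightarrow> nat \<Rightarrow> bool" where
  "reachable p q Al n m \<longleftrightarrow> (transition p q Al)\<^sup>*\<^sup>* n m"

end

theory Submission
  imports Defs
begin

lemma stepA:
  assumes "int q * int t = int s * int p + a" "0 \<le> a" "a \<le> int p - 1" "0 < q"
  shows "transition p q (alphA p) s t"
proof -
  have "tau_defined p q s a" unfolding tau_defined_def using assms(1)
    by (metis dvd_triv_left)
  moreover have "int t = tau p q s a" unfolding tau_def using assms(1,4)
    by (metis nonzero_mult_div_cancel_left of_nat_0_less_iff less_irrefl)
  moreover have "a \<in> alphA p" unfolding alphA_def using assms by auto
  ultimately show ?thesis unfolding transition_def by blast
qed

lemma trans_eq:
  assumes "transition p q Al s t" "0 < q"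
  shows "\<exists>a\<in>Al. int q * int t = int s * int p + a"
proof -
  obtain a where a: "a \<in> Al" "int q dvd (int s * int p + a)" "int t = (int s * int p + a) div int q"
    using assms unfolding transition_def tau_defined_def tau_def by blast
  then have "int q * int t = int s * int p + a" by simp
  with a show ?thesis by blast
qed

lemma A_mono:
  assumes "reachable p q (alphA p) n s" "0 < q" "q < p"
  shows "n \<le> s"
  using assms(1) unfolding reachable_def
proof (induction rule: rtranclp_induct)
  case base then show ?case by simp
next
  case (step y z)
  obtain a where a: "a \<in> alphA p" "int q * int z = int y * int p + a"
    using trans_eq[OF step(2) assms(2)] by blast
  have "a \<ge> 0" using a(1) unfolding alphA_def by auto
  hence "int q * int z \<ge> int q * int y"
  proof -
    have "int y * int q \<le> int y * int p" using assms(3) by (intro mult_left_mono) auto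
    thus ?thesis using a(2) \<open>a \<ge> 0\<close> by (simp add: mult.commute)
  qed
  hence "z \<ge> y" using assms(2) by (simp add: mult_le_cancel_left)
  then show ?case using step by simp
qed

lemma grow:
  assumes "\<forall>s\<in>{L..<L+K}. reachable p q (alphA p) n s" "1 \<le> K" "1 \<le> L"
    "1 < q" "2 * q < p"
  shows "\<exists>L'\<ge>1. \<forall>t\<in>{L'..<L'+(K+1)}. reachable p q (alphA p) n t"
proof (intro exI conjI ballI)
  define L' where "L' = (L*p + q - 1) div q"
  have dm: "q * L' + (L*p + q - 1) mod q = L*p + q - 1" unfolding L'_def
    by (metis div_mult_mod_eq mult.commute)
  have "(L*p + q - 1) mod q < q" using assms(4) by simp
  hence qL': "q * L' \<ge> L * p" "q * L' \<le> L*p + q - 1" using dm assms(4) by linarith+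
  have "L*q \<le> L*p" using assms by (intro mult_le_mono2) simp
  hence "q * L \<le> q * L'" using qL'(1) by (metis le_trans mult.commute)
  hence "L' \<ge> L" using assms(4) by simp
  thus "1 \<le> L'" using assms(3) by simp
  fix t assume t: "t \<in> {L'..<L'+(K+1)}"
  define s where "s = (q*t) div p"
  define a where "a = (q*t) mod p"
  have qt: "q*t = s*p + a" unfolding s_def a_def by simp
  have ap: "a < p" unfolding a_def using assms by simp
  have lo: "q*t \<ge> L*p" using t qL' by (meson atLeastLessThan_iff le_trans mult_le_mono2)
  have "q*t \<le> q*(L'+K)" using t by simp
  also have "\<dots> \<le> L*p + q - 1 + q*K" using qL' by (simp add: add_mult_distrib2)
  also have "\<dots> < L*p + K*p"
  proof -
    have "K*(2*q+1) \<le> K*p" using assms by (intro mult_le_mono2) simp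
    moreover have "1*q \<le> K*q" using assms(2) by (intro mult_le_mono1)
    moreover have "K*(2*q+1) = K*q + K*q + K" by (simp add: algebra_simps)
    moreover have "q*K = K*q" by simp
    ultimately have "q*K + q \<le> K*p" by linarith
    thus ?thesis using assms by linarith
  qed
  finally have hi: "q*t < (L+K)*p" by (simp add: add_mult_distrib)
  have "s \<ge> L"
  proof (rule ccontr)
    assume "\<not> L \<le> s" hence "s + 1 \<le> L" by simp
    hence "(s+1)*p \<le> L*p" by (rule mult_le_mono1)
    thus False using qt ap lo by (simp add: add_mult_distrib)
  qed
  moreover have "s < L + K"
  proof (rule ccontr)
    assume "\<not> s < L+K" hence "(L+K)*p \<le> s*p" by (intro mult_le_mono1) simp
    thus False using qt hi by linarith
  qed
  ultimately have rs: "reachable p q (alphA p) n s" using assms(1) by simp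
  have "int q * int t = int s * int p + int a" using qt by (metis of_nat_add of_nat_mult)
  hence "transition p q (alphA p) s t" by (rule stepA) (use ap assms in auto)
  thus "reachable p q (alphA p) n t" using rs unfolding reachable_def by simp
qed

lemma intervals:
  assumes "1 < q" "2 * q < p"
  shows "1 \<le> K \<Longrightarrow> \<exists>L\<ge>1. \<forall>s\<in>{L..<L+K}. reachable p q (alphA p) n s"
proof (induction K rule: dec_induct)
  case base
  show ?case
  proof (cases "n \<ge> 1")
    case True
    then show ?thesis by (intro exI[of _ n]) (auto simp: reachable_def)
  next
    case False
    hence n0: "n = 0" by simp
    have "int q * int 1 = int 0 * int p + int q" by simp
    hence "transition p q (alphA p) 0 1" by (rule stepA) (use assms in auto)
    hence "reachable p q (alphA p) n 1" using n0 unfolding reachable_def by simp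
    then show ?thesis by (intro exI[of _ 1]) auto
  qed
next
  case (step K)
  then obtain L where "L \<ge> 1" "\<forall>s\<in>{L..<L+K}. reachable p q (alphA p) n s" by blast
  from grow[OF this(2) step(1) this(1) assms] show ?case by simp
qed

theorem mainTheorem13:
  fixes p q :: nat
  assumes "1 < q" and "q < p" and "coprime p q" and "2 * q < p"
  shows "\<forall>n::nat. \<exists>m::nat. reachable p q (alphA p) n m \<and> \<not> reachable p q (alphB p q) n m"
proof
  fix n
  obtain L where L: "L \<ge> 1" "\<forall>s\<in>{L..<L+q}. reachable p q (alphA p) n s"
    using intervals[OF assms(1,4), of q n] assms(1) by auto
  define j where "j = (L + q - 1) div q"
  define s where "s = q * j"
  have dm: "q * j + (L + q - 1) mod q = L + q - 1" unfolding j_def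
    by (metis div_mult_mod_eq mult.commute)
  have "(L + q - 1) mod q < q" using assms(1) by simp
  hence "s \<ge> L" "s < L + q" using dm assms(1) unfolding s_def by linarith+
  then have rs: "reachable p q (alphA p) n s" using L by simp
  define m where "m = j * p"
  have qm: "int q * int m = int s * int p + 0" unfolding m_def s_def by simp
  have "transition p q (alphA p) s m" by (rule stepA[OF qm]) (use assms in auto)
  hence rA: "reachable p q (alphA p) n m" using rs unfolding reachable_def by simp
  have "\<not> reachable p q (alphB p q) n m"
  proof
    assume "reachable p q (alphB p q) n m"
    then have "(transition p q (alphB p q))\<^sup>*\<^sup>* n m" unfolding reachable_def .
    then show False
    proof (cases rule: rtranclp.cases)
      case rtrancl_refl
      have "n \<le> s" using A_mono[OF rs] assms by simp
      moreover have "s \<ge> 1" using \<open>s \<ge> L\<close> L by simp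
      moreover have "q * m = s * p" using qm by (metis add_0_right of_nat_eq_iff of_nat_mult)
      hence "q * m > q * s" using assms \<open>s\<ge>1\<close> by (metis mult.commute mult_less_mono2 less_le_trans zero_less_one)
      hence "m > s" by simp
      ultimately show False using rtrancl_refl by simp
    next
      case (rtrancl_into_rtrancl s')
      obtain a where a: "a \<in> alphB p q" "int q * int m = int s' * int p + a"
        using trans_eq[OF rtrancl_into_rtrancl(2)] assms by auto
      have ab: "1 \<le> a" "a < int p" using a(1) assms unfolding alphB_def by auto
      have "a = (int s - int s') * int p" using a(2) qm by (simp add: algebra_simps)
      show False
      proof (cases "int s - int s' \<ge> 1")
        case True
        hence "(int s - int s') * int p \<ge> 1 * int p" by (intro mult_right_mono) auto
        then show False using ab \<open>a = _\<close> by linarith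
      next
        case False
        hence "(int s - int s') * int p \<le> 0 * int p" by (intro mult_right_mono) auto
        then show False using ab \<open>a = _\<close> by linarith
      qed
    qed
  qed
  with rA show "\<exists>m. reachable p q (alphA p) n m \<and> \<not> reachable p q (alphB p q) n m" by blast
qed

end
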